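(* As $n\to\infty$, $$\mathbb{E}[Z_n^2]=4(n\log n)^2+8\gamma\,n^2\log n+\left(16+4\gamma^2-\frac{2\pi^2}{3}\right)n^2+O(n^{3/2}),$$ and $$\operatorname{Var}[Z_n]=\left(16-\frac{2\pi^2}{3}\right)n^2+O(n^{3/2}),$$ where $\gamma$ is Euler's constant.
   Context: Consider the random sequence of trees $(T_n)_{n\ge1}$ with node labels $1,\dots,n$ defined as follows: $T_1$ is a single node labeled $1$; $T_2$ consists of nodes $1,2$ joined by an edge; for $n\ge3$, $T_n$ is obtained from $T_{n-1}$ by adding a node labeled $n$ and an edge joining it to a node $i\in\{1,\dots,n-1\}$ chosen, conditionally on $T_1,\dots,T_{n-1}$, with probability $D_{n-1,i}/(2(n-2))$, where $D_{m,i}$ is the degree of node $i$ in $T_m$. The Zagreb index of $T_n$ is $Z_n=\sum_{j=1}^n D_{n,j}^2$. *)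

theory Defs
  imports "HOL-Probability.Probability" "HOL-Library.Landau_Symbols"
begin

text \<open>A labelled tree on nodes 1..n is represented by its list of edges; the edge
  added at step k is the pair (k, i), joining the new node k to the chosen node i.\<close>

type_synonym tree = "(nat \<times> nat) list"

definition deg :: "tree \<Rightarrow> nat \<Rightarrow> nat" where
  "deg es i = length (filter (\<lambda>(a, b). a = i \<or> b = i) es)"

text \<open>Distribution of T_n. For n = m+3 (so n >= 3), node n is attached to node
  i in {1..n-1} with probability D_{n-1,i} / (2(n-2)).\<close>
fun tree_pmf :: "nat \<Rightarrow> tree pmf" where
  "tree_pmf 0 = return_pmf []"
| "tree_pmf (Suc 0) = return_pmf []"
| "tree_pmf (Suc (Suc 0)) = return_pmf [(2, 1)]"
| "tree_pmf (Suc (Suc (Suc m))) =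
     tree_pmf (Suc (Suc m)) \<bind>
       (\<lambda>es. map_pmf (\<lambda>i. es @ [(m + 3, i)])
          (pmf_of_list [(i, real (deg es i) / (2 * real (m + 1))). i \<leftarrow> [1..<m + 3]]))"

definition zagreb :: "nat \<Rightarrow> tree \<Rightarrow> nat" where
  "zagreb n es = (\<Sum>j = 1..n. deg es j ^ 2)"

end

theory Submission
  imports Defs "HOL-Analysis.Harmonic_Numbers" "HOL-Real_Asymp.Real_Asymp"
begin

definition good :: "nat \<Rightarrow> tree \<Rightarrow> bool" where
  "good n es \<longleftrightarrow> length es = n - 1 \<and> (\<forall>(a,b)\<in>set es. 1 \<le> b \<and> b < a \<and> a \<le> n)"

lemma deg_Nil[simp]: "deg [] j = 0" by (simp add: deg_def)

lemma deg_Cons: "deg (e # es) j = deg es j + (if fst e = j \<or> snd e = j then 1 else 0)"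
  by (cases e) (simp add: deg_def)

lemma deg_append1: "deg (es @ [e]) j = deg es j + (if fst e = j \<or> snd e = j then 1 else 0)"
  by (cases e) (simp add: deg_def)

lemma deg_zero: "(\<forall>(a,b)\<in>set es. 1 \<le> b \<and> b < a \<and> a \<le> n) \<Longrightarrow> (j = 0 \<or> j > n) \<Longrightarrow> deg es j = 0"
  by (induction es) (auto simp: deg_Cons)

lemma sum_deg: "(\<forall>(a,b)\<in>set es. 1 \<le> b \<and> b < a \<and> a \<le> n) \<Longrightarrow> (\<Sum>j=1..n. deg es j) = 2 * length es"
proof (induction es)
  case Nil then show ?case by simp
next
  case (Cons e es)
  obtain a b where e: "e = (a,b)" by (cases e)
  have ab: "1 \<le> b" "b < a" "a \<le> n" using Cons.prems e by auto
  have "(\<Sum>j=1..n. deg (e#es) j) = (\<Sum>j=1..n. deg es j) + (\<Sum>j=1..n. (if a = j \<or> b = j then 1 else 0))"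
    by (simp add: deg_Cons e sum.distrib)
  also have "(\<Sum>j=1..n. (if a = j \<or> b = j then 1::nat else 0)) = card ({1..n} \<inter> {j. a = j \<or> b = j})"
    by (simp add: sum.If_cases)
  also have "{1..n} \<inter> {j. a = j \<or> b = j} = {a, b}" using ab by auto
  also have "card {a,b} = 2" using ab by simp
  finally show ?case using Cons by simp
qed

lemma wf_list:
  assumes "good (m+2) es"
  shows "pmf_of_list_wf [(i, real (deg es i) / (2 * real (m + 1))). i \<leftarrow> [1..<m + 3]]"
proof (rule pmf_of_list_wfI)
  show "x \<ge> 0" if "x \<in> set (map snd [(i, real (deg es i) / (2 * real (m + 1))). i \<leftarrow> [1..<m + 3]])" for x
    using that by auto
  have "sum_list (map snd [(i, real (deg es i) / (2 * real (m + 1))). i \<leftarrow> [1..<m + 3]])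
        = (\<Sum>i\<in>{1..<m+3}. real (deg es i) / (2 * real (m + 1)))"
    by (simp only: map_map o_def snd_conv sum_set_upt_conv_sum_list_nat[symmetric] set_upt)
  also have "\<dots> = (\<Sum>i=1..m+2. real (deg es i) / (2 * real (m + 1)))"
    by (intro sum.cong) auto
  also have "\<dots> = real (\<Sum>i=1..m+2. deg es i) / (2 * real (m + 1))"
    by (simp only: sum_divide_distrib of_nat_sum)
  also have "(\<Sum>i=1..m+2. deg es i) = 2 * (m+1)"
    using sum_deg[of es "m+2"] assms by (simp add: good_def)
  finally show "sum_list (map snd [(i, real (deg es i) / (2 * real (m + 1))). i \<leftarrow> [1..<m + 3]]) = 1"
    by simp
qed

lemma set_tree_pmf: "set_pmf (tree_pmf n) \<subseteq> {es. good n es}"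
proof (induction n rule: tree_pmf.induct)
  case 1 then show ?case by (simp add: good_def)
next
  case 2 then show ?case by (simp add: good_def)
next
  case 3 then show ?case by (simp add: good_def)
next
  case (4 m)
  show ?case
  proof
    fix es' assume "es' \<in> set_pmf (tree_pmf (Suc (Suc (Suc m))))"
    then obtain es i where es: "es \<in> set_pmf (tree_pmf (Suc (Suc m)))"
      and i: "i \<in> set_pmf (pmf_of_list [(i, real (deg es i) / (2 * real (m + 1))). i \<leftarrow> [1..<m + 3]])"
      and es': "es' = es @ [(m+3, i)]" by auto
    have g: "good (m+2) es" using es 4 by auto
    have "i \<in> {1..<m+3}" using set_pmf_of_list[OF wf_list[OF g]] i by auto
    then show "es' \<in> {es. good (Suc (Suc (Suc m))) es}" using g es' by (auto simp: good_def)
  qed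
qed

lemma finite_good: "finite {es. good n es}"
proof -
  have "{es. good n es} \<subseteq> {es. set es \<subseteq> {0..n} \<times> {0..n} \<and> length es = n - 1}"
    by (auto simp: good_def)
  moreover have "finite {es. set es \<subseteq> {0..n} \<times> {0..n} \<and> length es = n - 1}"
    by (rule finite_lists_length_eq) auto
  ultimately show ?thesis by (rule finite_subset)
qed

lemma finite_tree_pmf: "finite (set_pmf (tree_pmf n))"
  using finite_subset[OF set_tree_pmf finite_good] .

lemma sum_list_filter_map_distinct:
  "distinct xs \<Longrightarrow> sum_list (map snd (filter (\<lambda>z. fst z = i) (map (\<lambda>x. (x, w x)) xs)))
     = (if i \<in> set xs then w i else (0::real))"
proof (induction xs)
  case Nil then show ?case by simp
next
  case (Cons x xs) then show ?case by auto
qed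

lemma exp_pmf_of_list:
  fixes h :: "nat \<Rightarrow> real"
  assumes wf: "pmf_of_list_wf (map (\<lambda>x. (x, w x)) xs)" and d: "distinct xs"
  shows "measure_pmf.expectation (pmf_of_list (map (\<lambda>x. (x, w x)) xs)) h = (\<Sum>i\<in>set xs. w i * h i)"
proof -
  have "measure_pmf.expectation (pmf_of_list (map (\<lambda>x. (x, w x)) xs)) h
      = (\<Sum>a\<in>set xs. pmf (pmf_of_list (map (\<lambda>x. (x, w x)) xs)) a *\<^sub>R h a)"
    using set_pmf_of_list[OF wf] by (intro integral_measure_pmf) auto
  also have "\<dots> = (\<Sum>i\<in>set xs. w i * h i)"
    by (intro sum.cong refl) (simp add: pmf_pmf_of_list[OF wf] sum_list_filter_map_distinct[OF d])
  finally show ?thesis .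
qed

lemma exp_step:
  fixes F :: "tree \<Rightarrow> real"
  shows "measure_pmf.expectation (tree_pmf (Suc (Suc (Suc m)))) F =
     measure_pmf.expectation (tree_pmf (Suc (Suc m)))
       (\<lambda>es. \<Sum>i=1..m+2. real (deg es i) / (2 * real (m+1)) * F (es @ [(m+3,i)]))"
proof -
  let ?p = "tree_pmf (Suc (Suc m))"
  let ?L = "\<lambda>es. [(i, real (deg es i) / (2 * real (m + 1))). i \<leftarrow> [1..<m + 3]]"
  let ?G = "\<lambda>es. \<Sum>i=1..m+2. real (deg es i) / (2 * real (m+1)) * F (es @ [(m+3,i)])"
  have wf: "pmf_of_list_wf (?L es)" if "es \<in> set_pmf ?p" for es
    using wf_list[of m es] set_tree_pmf[of "Suc (Suc m)"] that by auto
  have "measure_pmf.expectation (tree_pmf (Suc (Suc (Suc m)))) F =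
     (\<Sum>a\<in>set_pmf ?p. pmf ?p a *\<^sub>R measure_pmf.expectation
         (map_pmf (\<lambda>i. a @ [(m + 3, i)]) (pmf_of_list (?L a))) F)"
  proof (simp only: tree_pmf.simps, rule pmf_expectation_bind)
    show "finite (set_pmf (map_pmf (\<lambda>i. x @ [(m + 3, i)]) (pmf_of_list (?L x))))"
      if "x \<in> set_pmf ?p" for x
      using finite_set_pmf_of_list[OF wf[OF that]] by simp
  qed (auto simp: finite_tree_pmf)
  also have "\<dots> = (\<Sum>a\<in>set_pmf ?p. pmf ?p a *\<^sub>R ?G a)"
  proof (intro sum.cong refl)
    fix a assume a: "a \<in> set_pmf ?p"
    have "measure_pmf.expectation (map_pmf (\<lambda>i. a @ [(m + 3, i)]) (pmf_of_list (?L a))) F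
        = measure_pmf.expectation (pmf_of_list (?L a)) (\<lambda>i. F (a @ [(m + 3, i)]))"
      by simp
    also have "\<dots> = (\<Sum>i\<in>set [1..<m+3]. real (deg a i) / (2 * real (m + 1)) * F (a @ [(m + 3, i)]))"
      using wf[OF a] by (intro exp_pmf_of_list) auto
    also have "\<dots> = ?G a" by (intro sum.cong) auto
    finally show "pmf ?p a *\<^sub>R measure_pmf.expectation (map_pmf (\<lambda>i. a @ [(m + 3, i)]) (pmf_of_list (?L a))) F
       = pmf ?p a *\<^sub>R ?G a" by simp
  qed
  also have "\<dots> = measure_pmf.expectation ?p ?G"
    by (rule integral_measure_pmf[symmetric]) (auto simp: finite_tree_pmf)
  finally show ?thesis .
qed

definition Zr :: "nat \<Rightarrow> tree \<Rightarrow> real" where "Zr n es = real (zagreb n es)"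
definition Sr :: "nat \<Rightarrow> tree \<Rightarrow> real" where "Sr n es = (\<Sum>j=1..n. real (deg es j) ^ 3)"

lemma Zr_alt: "Zr n es = (\<Sum>j=1..n. real (deg es j) ^ 2)"
  by (simp add: Zr_def zagreb_def)

lemma wsum:
  fixes d :: "nat \<Rightarrow> real"
  assumes "finite A" "(\<Sum>i\<in>A. d i) = D" "D \<noteq> 0"
  shows "(\<Sum>i\<in>A. d i / D * (c0 + c1 * d i + c2 * d i ^ 2))
       = c0 + c1 * (\<Sum>i\<in>A. d i ^ 2) / D + c2 * (\<Sum>i\<in>A. d i ^ 3) / D"
proof -
  have "(\<Sum>i\<in>A. d i / D * (c0 + c1 * d i + c2 * d i ^ 2))
      = c0 / D * (\<Sum>i\<in>A. d i) + c1 / D * (\<Sum>i\<in>A. d i ^ 2) + c2 / D * (\<Sum>i\<in>A. d i ^ 3)"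
    by (simp add: sum_distrib_left sum.distrib ring_distribs power2_eq_square power3_eq_cube
        mult.commute mult.left_commute sum_divide_distrib)
  then show ?thesis using assms by simp
qed

lemma sum_bump:
  fixes g :: "nat \<Rightarrow> real"
  assumes "i \<in> {1..N::nat}"
  shows "(\<Sum>j=1..N. g (d j + (if j = i then 1 else 0))) = (\<Sum>j=1..N. g (d j)) + g (d i + 1) - g (d i)"
proof -
  have "(\<Sum>j=1..N. g (d j + (if j = i then 1 else 0))) = g (d i + 1) + (\<Sum>j\<in>{1..N}-{i}. g (d j))"
    using assms by (subst sum.remove[of "{1..N}" i]) simp_all
  moreover have "(\<Sum>j=1..N. g (d j)) = g (d i) + (\<Sum>j\<in>{1..N}-{i}. g (d j))"
    using assms by (subst sum.remove[of "{1..N}" i]) simp_all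
  ultimately show ?thesis by simp
qed

lemma step_sum_gen:
  fixes g :: "nat \<Rightarrow> real"
  assumes g: "good (m+2) es" and i: "i \<in> {1..m+2}" and g0: "g 0 = 0"
  shows "(\<Sum>j=1..m+3. g (deg (es @ [(m+3,i)]) j)) = (\<Sum>j=1..m+2. g (deg es j)) + g (deg es i + 1) - g (deg es i) + g 1"
proof -
  have z: "deg es (m+3) = 0" using g by (intro deg_zero) (auto simp: good_def)
  have "(\<Sum>j=1..m+3. g (deg (es @ [(m+3,i)]) j)) = (\<Sum>j=1..m+2. g (deg (es @ [(m+3,i)]) j)) + g 1"
    using z i by (simp add: deg_append1 numeral_3_eq_3)
  also have "(\<Sum>j=1..m+2. g (deg (es @ [(m+3,i)]) j)) = (\<Sum>j=1..m+2. g (deg es j + (if j = i then 1 else 0)))"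
    by (intro sum.cong) (auto simp: deg_append1)
  also have "\<dots> = (\<Sum>j=1..m+2. g (deg es j)) + g (deg es i + 1) - g (deg es i)"
    by (rule sum_bump[OF i])
  finally show ?thesis .
qed

lemma Zr_step: "good (m+2) es \<Longrightarrow> i \<in> {1..m+2} \<Longrightarrow>
   Zr (m+3) (es @ [(m+3,i)]) = Zr (m+2) es + 2 * real (deg es i) + 2"
  unfolding Zr_alt
  by (subst step_sum_gen[where g = "\<lambda>x. real x ^ 2"]) (auto simp: power2_eq_square algebra_simps)

lemma Sr_step: "good (m+2) es \<Longrightarrow> i \<in> {1..m+2} \<Longrightarrow>
   Sr (m+3) (es @ [(m+3,i)]) = Sr (m+2) es + 3 * real (deg es i) ^ 2 + 3 * real (deg es i) + 2"
  unfolding Sr_def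
  by (subst step_sum_gen[where g = "\<lambda>x. real x ^ 3"]) (auto simp: power3_eq_cube power2_eq_square algebra_simps)

lemma sumdeg_real: "good (m+2) es \<Longrightarrow> (\<Sum>i=1..m+2. real (deg es i)) = 2 * real (m+1)"
proof -
  assume g: "good (m+2) es"
  have "(\<Sum>i=1..m+2. deg es i) = 2 * (m+1)"
    using sum_deg[of es "m+2"] g by (simp add: good_def)
  then have "real (\<Sum>i=1..m+2. deg es i) = 2 * real (m+1)" by simp
  then show ?thesis by (simp only: of_nat_sum)
qed

lemma alg1: "(x::real) > 0 \<Longrightarrow> (Z+2) + 2*Z/(2*x) = Z*(1+1/x) + 2"
  by (simp add: field_simps)
lemma alg2: "(x::real) > 0 \<Longrightarrow> (S + 2) + 3*Z/(2*x) + 3*S/(2*x) = S*(1+3/(2*x)) + 3*Z/(2*x) + 2"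
  by (simp add: field_simps)
lemma alg3: "(x::real) > 0 \<Longrightarrow> (Z^2+4*Z+4) + (4*Z+8)*Z/(2*x) + 4*S/(2*x) = Z^2*(1+2/x) + 4*Z + 2*S/x + 4*Z/x + 4"
  by (simp add: field_simps power2_eq_square)

lemma GZ: assumes g: "good (m+2) es"
  shows "(\<Sum>i=1..m+2. real (deg es i) / (2 * real (m+1)) * Zr (m+3) (es @ [(m+3,i)]))
      = Zr (m+2) es * (1 + 1 / real (m+1)) + 2" (is "_ = ?R")
proof -
  have "(\<Sum>i=1..m+2. real (deg es i) / (2 * real (m+1)) * Zr (m+3) (es @ [(m+3,i)]))
     = (\<Sum>i=1..m+2. real (deg es i) / (2 * real (m+1)) * ((Zr (m+2) es + 2) + 2 * real (deg es i) + 0 * real (deg es i) ^ 2))"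
    using g by (intro sum.cong refl) (simp add: Zr_step)
  also have "\<dots> = (Zr (m+2) es + 2) + 2 * Zr (m+2) es / (2 * real (m+1))"
    by (subst wsum[OF finite_atLeastAtMost sumdeg_real[OF g]]) (auto simp: Zr_alt)
  also have "\<dots> = ?R" using alg1[of "real (m+1)" "Zr (m+2) es"] by simp
  finally show ?thesis .
qed

lemma GS: assumes g: "good (m+2) es"
  shows "(\<Sum>i=1..m+2. real (deg es i) / (2 * real (m+1)) * Sr (m+3) (es @ [(m+3,i)]))
      = Sr (m+2) es * (1 + 3 / (2 * real (m+1))) + 3 * Zr (m+2) es / (2 * real (m+1)) + 2" (is "_ = ?R")
proof -
  have "(\<Sum>i=1..m+2. real (deg es i) / (2 * real (m+1)) * Sr (m+3) (es @ [(m+3,i)]))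
     = (\<Sum>i=1..m+2. real (deg es i) / (2 * real (m+1)) * ((Sr (m+2) es + 2) + 3 * real (deg es i) + 3 * real (deg es i) ^ 2))"
    using g by (intro sum.cong refl) (simp add: Sr_step algebra_simps)
  also have "\<dots> = (Sr (m+2) es + 2) + 3 * Zr (m+2) es / (2 * real (m+1)) + 3 * Sr (m+2) es / (2 * real (m+1))"
    by (subst wsum[OF finite_atLeastAtMost sumdeg_real[OF g]]) (auto simp: Zr_alt Sr_def)
  also have "\<dots> = ?R" using alg2[of "real (m+1)" "Sr (m+2) es" "Zr (m+2) es"] by simp
  finally show ?thesis .
qed

lemma GZ2: assumes g: "good (m+2) es"
  shows "(\<Sum>i=1..m+2. real (deg es i) / (2 * real (m+1)) * (Zr (m+3) (es @ [(m+3,i)]))^2)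
      = Zr (m+2) es ^ 2 * (1 + 2 / real (m+1)) + 4 * Zr (m+2) es + 2 * Sr (m+2) es / real (m+1)
        + 4 * Zr (m+2) es / real (m+1) + 4" (is "_ = ?R")
proof -
  let ?Z = "Zr (m+2) es"
  have "(\<Sum>i=1..m+2. real (deg es i) / (2 * real (m+1)) * (Zr (m+3) (es @ [(m+3,i)]))^2)
     = (\<Sum>i=1..m+2. real (deg es i) / (2 * real (m+1)) * ((?Z ^ 2 + 4 * ?Z + 4) + (4 * ?Z + 8) * real (deg es i) + 4 * real (deg es i) ^ 2))"
    using g by (intro sum.cong refl) (simp add: Zr_step power2_eq_square algebra_simps)
  also have "\<dots> = (?Z ^ 2 + 4 * ?Z + 4) + (4 * ?Z + 8) * ?Z / (2 * real (m+1)) + 4 * Sr (m+2) es / (2 * real (m+1))"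
    by (subst wsum[OF finite_atLeastAtMost sumdeg_real[OF g]]) (auto simp: Zr_alt Sr_def)
  also have "\<dots> = ?R" using alg3[of "real (m+1)" "Zr (m+2) es" "Sr (m+2) es"] by simp
  finally show ?thesis .
qed

definition a :: "nat \<Rightarrow> real" where "a n = measure_pmf.expectation (tree_pmf n) (Zr n)"
definition b :: "nat \<Rightarrow> real" where "b n = measure_pmf.expectation (tree_pmf n) (Sr n)"
definition c :: "nat \<Rightarrow> real" where "c n = measure_pmf.expectation (tree_pmf n) (\<lambda>t. Zr n t ^ 2)"

lemma intg[simp]: "integrable (measure_pmf (tree_pmf n)) (f :: tree \<Rightarrow> real)"
  by (rule integrable_measure_pmf_finite[OF finite_tree_pmf])

lemma cong_good:
  assumes "\<And>es. good n es \<Longrightarrow> f es = g es"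
  shows "measure_pmf.expectation (tree_pmf n) f = measure_pmf.expectation (tree_pmf n) (g :: tree \<Rightarrow> real)"
  using assms set_tree_pmf[of n] by (intro integral_cong_AE) (auto simp: AE_measure_pmf_iff)

lemma exp_step':
  fixes F :: "tree \<Rightarrow> real"
  shows "measure_pmf.expectation (tree_pmf (m+3)) F =
     measure_pmf.expectation (tree_pmf (m+2))
       (\<lambda>es. \<Sum>i=1..m+2. real (deg es i) / (2 * real (m+1)) * F (es @ [(m+3,i)]))"
proof -
  have e: "tree_pmf (m+3) = tree_pmf (Suc(Suc(Suc m)))" "tree_pmf (m+2) = tree_pmf (Suc (Suc m))"
    by (simp_all add: numeral_3_eq_3 numeral_2_eq_2)
  show ?thesis unfolding e by (rule exp_step)
qed

lemma a_rec: "a (m+3) = a (m+2) * (1 + 1 / real (m+1)) + 2"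
proof -
  have "a (m+3) = measure_pmf.expectation (tree_pmf (m+2))
       (\<lambda>es. \<Sum>i=1..m+2. real (deg es i) / (2 * real (m+1)) * Zr (m+3) (es @ [(m+3,i)]))"
    unfolding a_def by (rule exp_step')
  also have "\<dots> = measure_pmf.expectation (tree_pmf (m+2)) (\<lambda>es. Zr (m+2) es * (1 + 1 / real (m+1)) + 2)"
    by (rule cong_good) (rule GZ)
  also have "\<dots> = a (m+2) * (1 + 1 / real (m+1)) + 2"
    by (simp add: a_def)
  finally show ?thesis .
qed

lemma b_rec: "b (m+3) = b (m+2) * (1 + 3 / (2 * real (m+1))) + 3 * a (m+2) / (2 * real (m+1)) + 2"
proof -
  have "b (m+3) = measure_pmf.expectation (tree_pmf (m+2))
       (\<lambda>es. \<Sum>i=1..m+2. real (deg es i) / (2 * real (m+1)) * Sr (m+3) (es @ [(m+3,i)]))"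
    unfolding b_def by (rule exp_step')
  also have "\<dots> = measure_pmf.expectation (tree_pmf (m+2))
      (\<lambda>es. Sr (m+2) es * (1 + 3 / (2 * real (m+1))) + 3 * Zr (m+2) es / (2 * real (m+1)) + 2)"
    by (rule cong_good) (rule GS)
  also have "\<dots> = b (m+2) * (1 + 3 / (2 * real (m+1))) + 3 * a (m+2) / (2 * real (m+1)) + 2"
    by (simp add: a_def b_def)
  finally show ?thesis .
qed

lemma c_rec: "c (m+3) = c (m+2) * (1 + 2 / real (m+1)) + 4 * a (m+2) + 2 * b (m+2) / real (m+1)
        + 4 * a (m+2) / real (m+1) + 4"
proof -
  have "c (m+3) = measure_pmf.expectation (tree_pmf (m+2))
       (\<lambda>es. \<Sum>i=1..m+2. real (deg es i) / (2 * real (m+1)) * (Zr (m+3) (es @ [(m+3,i)]))^2)"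
    unfolding c_def by (rule exp_step')
  also have "\<dots> = measure_pmf.expectation (tree_pmf (m+2))
      (\<lambda>es. Zr (m+2) es ^ 2 * (1 + 2 / real (m+1)) + 4 * Zr (m+2) es + 2 * Sr (m+2) es / real (m+1)
        + 4 * Zr (m+2) es / real (m+1) + 4)"
    by (rule cong_good) (rule GZ2)
  also have "\<dots> = c (m+2) * (1 + 2 / real (m+1)) + 4 * a (m+2) + 2 * b (m+2) / real (m+1)
        + 4 * a (m+2) / real (m+1) + 4"
    by (simp add: a_def b_def c_def)
  finally show ?thesis .
qed

lemma init2: "a 2 = 2" "b 2 = 2" "c 2 = 4"
proof -
  have t: "tree_pmf 2 = return_pmf [(2,1)]" by (simp add: numeral_2_eq_2)
  have d1: "deg [(2,1)] 1 = 1" "deg [(2,1)] 2 = 1" by (simp_all add: deg_def)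
  have Z: "Zr 2 [(2,1)] = 2" by (simp add: Zr_alt numeral_2_eq_2 deg_def)
  have S: "Sr 2 [(2,1)] = 2" by (simp add: Sr_def numeral_2_eq_2 deg_def)
  show "a 2 = 2" "b 2 = 2" "c 2 = 4" using Z S by (simp_all add: a_def b_def c_def t)
qed

lemma algA0:
  fixes p u :: real assumes p: "p > 0" and u: "u = p + 1"
  shows "(2*p*(h + 1/p)) * (1 + 1/p) + 2 = 2*u*(h + 1/p + 1/u)"
proof -
  have "u > 0" using p u by simp
  then show ?thesis using p by (simp add: field_simps) (simp add: u algebra_simps)
qed

lemma algB0:
  fixes p u w :: real assumes p: "p > 0" and u: "u = p + 1" and w: "w = p + 2"
  shows "(32*u*p*r - 6*p*h - 16*u + 10) * (1 + 3/(2*p))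
   + 3*(2*p*(h + 1/p))/(2*p) + 2
  = 32*w*u*(r*(2*p+3)/(2*w)) - 6*u*(h + 1/p) - 16*w + 10"
proof -
  have "u > 0" "w > 0" using p u w by simp_all
  then show ?thesis using p by (simp add: field_simps) (simp add: u w algebra_simps)
qed

lemma algC0:
  fixes p u w :: real assumes p: "p > 0" and u: "u = p + 1" and w: "w = p + 2"
  shows "(8*p*(h + 1/p) + 2*(32*u*p*r - 6*p*h - 16*u + 10)/p + 8*(h + 1/p) + 4) / (u*w)
   = 20*(h+1/p+1/u)/w - 12*(h+1/p)/u + 48/w - 48/u - 128*(r*(2*p+3)/(2*w) - r)"
proof -
  have "u > 0" "w > 0" using p u w by simp_all
  then show ?thesis using p by (simp add: field_simps) (simp add: u w algebra_simps)
qed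

definition h2 :: "nat \<Rightarrow> real" where "h2 n = (\<Sum>k<n. 1 / (real k + 1)^2)"

fun rho :: "nat \<Rightarrow> real" where
  "rho 0 = 1"
| "rho (Suc n) = rho n * (2 * real n + 1) / (2 * real n + 2)"

definition Xf :: "nat \<Rightarrow> real" where "Xf k = harm k ^ 2 - h2 k"

definition Gam :: "nat \<Rightarrow> real" where
  "Gam n = 16 + 10 * Xf n - 6 * Xf (n - 1) + 48 / real n - 128 * rho n"

lemma h2_Suc: "h2 (Suc k) = h2 k + 1 / (real k + 1)^2"
  by (simp add: h2_def)

lemma harm_Suc': "harm (Suc k) = harm k + 1 / (real k + 1)"
  by (simp add: harm_Suc field_simps)

lemma Xf_aux: "(y::real) > 0 \<Longrightarrow> (H + 1/y)^2 - (q + 1/y^2) = H^2 - q + 2*H/y"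
  by (simp add: field_simps power2_eq_square)

lemma Xf_Suc: "Xf (Suc k) = Xf k + 2 * harm k / (real k + 1)"
  unfolding Xf_def h2_Suc harm_Suc' by (rule Xf_aux) simp

lemma closed:
  "a (m+2) = 2 * real (m+1) * harm (m+1) \<and>
   b (m+2) = 32 * real (m+2) * real (m+1) * rho (m+2) - 6 * real (m+1) * harm m - 16 * real (m+2) + 10 \<and>
   c (m+2) = real (m+2) * real (m+1) * Gam (m+2)"
proof (induction m)
  case 0
  have h: "harm (Suc 0) = (1::real)" "harm (Suc (Suc 0)) = (3/2::real)" "harm 0 = (0::real)"
    by (simp_all add: harm_def eval_nat_numeral)
  have q: "h2 (Suc 0) = 1" "h2 (Suc (Suc 0)) = 5/4" by (simp_all add: h2_def eval_nat_numeral)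
  have r: "rho (Suc (Suc 0)) = 3/8" by (simp add: eval_nat_numeral)
  have i: "a (Suc (Suc 0)) = 2" "b (Suc (Suc 0)) = 2" "c (Suc (Suc 0)) = 4"
    using init2 by (simp_all add: numeral_2_eq_2)
  show ?case by (simp add: i h q r Gam_def Xf_def numeral_2_eq_2)
next
  case (Suc m)
  define p where "p = real m + 1"
  define u where "u = p + 1"
  define w where "w = p + 2"
  define h :: real where "h = harm m"
  define r where "r = rho (m+2)"
  have p0: "p > 0" by (simp add: p_def)
  have e: "real (m+1) = p" "real (m+2) = u" "real (m+3) = w"
    by (simp_all add: p_def u_def w_def)
  have H1: "harm (m+1) = h + 1/p" by (simp add: h_def p_def harm_Suc')
  have H2: "harm (m+2) = h + 1/p + 1/u"
    using harm_Suc'[of "m+1"] H1 by (simp add: u_def p_def)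
  have R: "rho (m+3) = r * (2*p+3) / (2*w)"
    by (simp add: r_def numeral_3_eq_3 numeral_2_eq_2 p_def w_def algebra_simps)
  have IHa: "a (m+2) = 2*p*(h + 1/p)" using Suc.IH by (simp only: e H1)
  have IHb: "b (m+2) = 32*u*p*r - 6*p*h - 16*u + 10" using Suc.IH by (simp only: e h_def r_def)
  have IHc: "c (m+2) = u*p*Gam (m+2)" using Suc.IH by (simp only: e)
  have A: "a (m+3) = 2*u*(h + 1/p + 1/u)"
    using a_rec[of m] IHa algA0[OF p0 u_def, of h] by (simp only: e)
  have B: "b (m+3) = 32*w*u*(r*(2*p+3)/(2*w)) - 6*u*(h + 1/p) - 16*w + 10"
    using b_rec[of m] IHa IHb algB0[OF p0 u_def w_def, of r h] by (simp only: e)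
  have G: "Gam (m+3) = Gam (m+2) + (20*(h+1/p+1/u)/w - 12*(h+1/p)/u + 48/w - 48/u - 128*(r*(2*p+3)/(2*w) - r))"
  proof -
    have x3: "Xf (m+3) = Xf (m+2) + 2 * (h+1/p+1/u) / w"
      using Xf_Suc[of "m+2"] H2 by (simp add: numeral_3_eq_3 w_def p_def)
    have x2: "Xf (m+2) = Xf (m+1) + 2 * (h+1/p) / u"
      using Xf_Suc[of "m+1"] H1 by (simp add: u_def p_def)
    have "Gam (m+3) = 16 + 10 * Xf (m+3) - 6 * Xf (m+2) + 48 / w - 128 * rho (m+3)"
      by (simp add: Gam_def e[symmetric])
    also have "\<dots> = 16 + 10 * (Xf (m+1) + 2 * (h+1/p) / u + 2 * (h+1/p+1/u) / w)
        - 6 * (Xf (m+1) + 2 * (h+1/p) / u) + 48 / w - 128 * (r * (2*p+3) / (2*w))"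
      by (simp only: x3 x2 R)
    finally have g3: "Gam (m+3) = \<dots>" .
    have "Gam (m+2) = 16 + 10 * Xf (m+2) - 6 * Xf (m+1) + 48 / u - 128 * r"
      by (simp add: Gam_def e[symmetric] r_def)
    also have "\<dots> = 16 + 10 * (Xf (m+1) + 2 * (h+1/p) / u) - 6 * Xf (m+1) + 48 / u - 128 * r"
      by (simp only: x2)
    finally have g2: "Gam (m+2) = \<dots>" .
    have "u > 0" "w > 0" using p0 by (simp_all add: u_def w_def)
    then show ?thesis unfolding g3 g2 using p0 by (simp add: field_simps)
  qed
  have F: "4*(2*p*(h + 1/p)) + 2*(32*u*p*r - 6*p*h - 16*u + 10)/p + 4*(2*p*(h + 1/p))/p + 4
      = (8*p*(h + 1/p) + 2*(32*u*p*r - 6*p*h - 16*u + 10)/p + 8*(h + 1/p) + 4)"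
    using p0 by simp
  have "c (m+3) = u*p*Gam (m+2) * (1 + 2/p) + 4*(2*p*(h + 1/p)) + 2*(32*u*p*r - 6*p*h - 16*u + 10)/p + 4*(2*p*(h + 1/p))/p + 4"
    using c_rec[of m] by (simp only: e IHa IHb IHc)
  also have "\<dots> = u*p*Gam (m+2) * (1 + 2/p) + (8*p*(h + 1/p) + 2*(32*u*p*r - 6*p*h - 16*u + 10)/p + 8*(h + 1/p) + 4)"
    using F by (simp only: add.assoc)
  also have "u*p*Gam (m+2) * (1 + 2/p) = u * w * Gam (m+2)"
    using p0 by (simp add: field_simps w_def)
  also have "(8*p*(h + 1/p) + 2*(32*u*p*r - 6*p*h - 16*u + 10)/p + 8*(h + 1/p) + 4)
     = u * w * (20*(h+1/p+1/u)/w - 12*(h+1/p)/u + 48/w - 48/u - 128*(r*(2*p+3)/(2*w) - r))"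
  proof -
    have "u * w \<noteq> 0" using p0 by (simp add: u_def w_def)
    from divide_eq_eq[THEN iffD1, OF algC0[OF p0 u_def w_def, of h r]] this
    show ?thesis by (simp only: mult.commute) simp
  qed
  finally have "c (m+3) = u * w * Gam (m+2) + u * w * (20*(h+1/p+1/u)/w - 12*(h+1/p)/u + 48/w - 48/u - 128*(r*(2*p+3)/(2*w) - r))" .
  then have "c (m+3) = u * w * (Gam (m+2) + (20*(h+1/p+1/u)/w - 12*(h+1/p)/u + 48/w - 48/u - 128*(r*(2*p+3)/(2*w) - r)))"
    by (simp only: distrib_left)
  then have C: "c (m+3) = w * u * Gam (m+3)" unfolding G[symmetric] by (simp only: mult.commute)
  have e2: "Suc m + 2 = m + 3" "Suc m + 1 = m + 2" by simp_all
  have H1': "harm (Suc m) = h + 1/p" using H1 by simp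
  show ?case unfolding e2 by (simp only: e A B C H1' H2 R)
qed

lemma rho_nonneg: "rho n \<ge> 0"
  by (induction n) auto

lemma rho_sq: "rho n ^ 2 * (real n + 1) \<le> 1"
proof (induction n)
  case 0 then show ?case by simp
next
  case (Suc n)
  have k: "(2 * real n + 1)^2 * (real n + 2) \<le> (2 * real n + 2)^2 * (real n + 1)"
    by (simp add: power2_eq_square algebra_simps)
  have "rho (Suc n) ^ 2 * (real (Suc n) + 1) = rho n ^ 2 * ((2 * real n + 1)^2 * (real n + 2) / (2 * real n + 2)^2)"
    by (simp add: power_divide field_simps power2_eq_square)
  also have "\<dots> \<le> rho n ^ 2 * ((2 * real n + 2)^2 * (real n + 1) / (2 * real n + 2)^2)"
    by (intro mult_left_mono divide_right_mono k) auto
  also have "\<dots> = rho n ^ 2 * (real n + 1)" by simp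
  finally show ?case using Suc by simp
qed

lemma rho_bound: "real n ^ 2 * rho n \<le> real n powr (3/2)"
proof -
  have r: "rho n ^ 2 * real n \<le> 1" using rho_sq[of n] rho_nonneg[of n]
    by (smt (verit) mult_left_mono zero_le_power2)
  have "(real n ^ 2 * rho n) ^ 2 = real n ^ 3 * (rho n ^ 2 * real n)"
    by (simp add: power2_eq_square power3_eq_cube)
  also have "\<dots> \<le> real n ^ 3" using r by (simp add: mult_left_le)
  also have "real n ^ 3 = (real n powr (3/2)) ^ 2"
    by (simp add: powr_powr[symmetric] powr_realpow[symmetric] power2_eq_square powr_add[symmetric] del: powr_powr)
  finally show ?thesis
    by (rule power2_le_imp_le) simp
qed

lemma isq: "(\<lambda>k. 1 / (real k + 1)^2) sums (pi^2/6)"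
proof -
  have e: "\<And>k. real k + 1 = 1 + real k" by simp
  show ?thesis unfolding e using inverse_squares_sums by simp
qed

lemma h2_lim: "h2 \<longlonglongrightarrow> pi^2/6"
  using isq unfolding sums_def h2_def .

lemma h2_le: "h2 n \<le> pi^2/6"
proof -
  have s: "summable (\<lambda>k. 1 / (real k + 1)^2)" using isq by (simp add: sums_iff)
  have "h2 n \<le> (\<Sum>k. 1 / (real k + 1)^2)"
    unfolding h2_def by (rule sum_le_suminf[OF s]) auto
  also have "\<dots> = pi^2/6" using isq by (simp add: sums_iff)
  finally show ?thesis .
qed

lemma sq_tel: assumes "(x::real) > 0" shows "1 / (x + 1)^2 \<le> 1 / x - 1 / (x + 1)"
proof -
  have "x * (x + 1) \<le> (x + 1)^2" using assms by (simp add: power2_eq_square algebra_simps)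
  moreover have "0 < x * (x + 1)" using assms by simp
  ultimately have "1 / (x + 1)^2 \<le> 1 / (x * (x + 1))"
    by (intro divide_left_mono) (use assms in \<open>auto intro!: mult_pos_pos\<close>)
  also have "\<dots> = 1 / x - 1 / (x + 1)" using assms by (simp add: field_simps)
  finally show ?thesis .
qed

lemma h2_tail_fin: "n \<ge> 1 \<Longrightarrow> h2 (n + M) - h2 n \<le> 1 / real n - 1 / real (n + M)"
proof (induction M)
  case 0 then show ?case by simp
next
  case (Suc M)
  have k0: "1 / (real (n+M) + 1)^2 \<le> 1 / real (n+M) - 1 / (real (n+M) + 1)"
    using Suc.prems by (intro sq_tel) simp
  have e: "real (n + Suc M) = real (n+M) + 1" by simp
  have k: "1 / (real (n+M) + 1)^2 \<le> 1 / real (n+M) - 1 / real (n + Suc M)"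
    using k0 unfolding e .
  show ?case using Suc k by (simp add: h2_Suc algebra_simps)
qed

lemma h2_tail: "n \<ge> 1 \<Longrightarrow> pi^2/6 - h2 n \<le> 1 / real n"
proof -
  assume n: "n \<ge> 1"
  have "(\<lambda>M. h2 (M + n)) \<longlonglongrightarrow> pi^2/6" using h2_lim by (rule LIMSEQ_ignore_initial_segment)
  moreover have "\<exists>N. \<forall>M\<ge>N. h2 (M + n) \<le> h2 n + 1 / real n"
  proof (intro exI allI impI)
    fix M :: nat
    have "h2 (n + M) \<le> h2 n + 1 / real n - 1 / real (n + M)" using h2_tail_fin[OF n, of M] by simp
    also have "\<dots> \<le> h2 n + 1 / real n" by simp
    finally show "h2 (M + n) \<le> h2 n + 1 / real n" by (simp add: add.commute)
  qed
  ultimately have "pi^2/6 \<le> h2 n + 1 / real n" by (rule LIMSEQ_le_const2)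
  then show ?thesis by simp
qed

lemma harm_err: assumes "n \<ge> 1" shows "\<bar>harm n - ln (real n) - euler_mascheroni\<bar> \<le> 1 / real n"
proof -
  obtain k where k: "n = Suc k" using assms by (cases n) auto
  have lo: "euler_mascheroni \<ge> harm n - ln (real n + 1) + 1 / (2 * (real n + 1))"
    using euler_mascheroni_lower[of k] by (simp add: k add.commute)
  have up: "euler_mascheroni \<le> harm n - ln (real n + 1) + 1 / (2 * real n)"
    using euler_mascheroni_upper[of k] by (simp add: k add.commute)
  have np: "real n > 0" using assms by simp
  have l1: "ln (real n + 1) - ln (real n) \<le> 1 / real n"
  proof -
    have "(real n + 1) / real n = 1 + 1 / real n" using np by (simp add: field_simps)
    moreover have "ln ((real n + 1) / real n) = ln (real n + 1) - ln (real n)"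
      using np by (intro ln_divide_pos) auto
    ultimately have "ln (real n + 1) - ln (real n) = ln (1 + 1 / real n)" by simp
    also have "\<dots> \<le> 1 / real n" by (rule ln_add_one_self_le_self) simp
    finally show ?thesis .
  qed
  have l0: "ln (real n + 1) - ln (real n) \<ge> 0" using np by simp
  have p1: "1 / (2 * (real n + 1)) \<ge> 0" "1 / (2 * real n) \<le> 1 / real n" using np by (simp_all add: field_simps)
  show ?thesis unfolding abs_le_iff using lo up l1 l0 p1 by linarith
qed

lemma bigo_bound:
  fixes f g :: "nat \<Rightarrow> real"
  assumes "eventually (\<lambda>n. \<bar>f n\<bar> \<le> g n) sequentially" "g \<in> O(h)"
  shows "f \<in> O(h)"
proof -
  have "f \<in> O(g)"
    by (rule bigoI[where c = 1]) (use assms(1) in \<open>auto elim: eventually_mono\<close>)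
  then show ?thesis using assms(2) by (rule landau_o.big_trans)
qed

lemma closed2:
  assumes "n \<ge> 2"
  shows "a n = 2 * (real n - 1) * harm (n - 1)"
    "c n = real n * (real n - 1) * (16 + 4 * (harm n ^ 2 - h2 n) + 12 * harm (n-1) / real n + 48 / real n - 128 * rho n)"
proof -
  obtain m where m: "n = m + 2" using assms by (metis add.commute le_iff_add)
  have cl: "a n = 2 * (real n - 1) * harm (n - 1)" "c n = real n * (real n - 1) * Gam n"
    unfolding m using closed[of m] by (simp_all add: algebra_simps)
  show "a n = 2 * (real n - 1) * harm (n - 1)" by (rule cl(1))
  have nn: "n = Suc (n - 1)" using assms by simp
  have "Xf n = Xf (n - 1) + 2 * harm (n - 1) / real n"
    using Xf_Suc[of "n-1"] nn by (metis of_nat_Suc add.commute)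
  then have "Gam n = 16 + 4 * Xf n + 12 * harm (n-1) / real n + 48 / real n - 128 * rho n"
    unfolding Gam_def by (simp add: algebra_simps)
  then show "c n = real n * (real n - 1) * (16 + 4 * (harm n ^ 2 - h2 n) + 12 * harm (n-1) / real n + 48 / real n - 128 * rho n)"
    using cl(2) by (simp add: Xf_def)
qed

lemma idZ:
  fixes N L g e d H' r P :: real
  assumes "N \<noteq> 0"
  shows "N*(N-1)*(16 + 4*((e+L+g)^2 - (P/6 - d)) + 12*H'/N + 48/N - 128*r)
    - (4 * (N * L) ^ 2 + 8 * g * N ^ 2 * L + (16 + 4 * g ^ 2 - 2 * P / 3) * N ^ 2)
   = - (N*(16 + 4*(L+g)^2 - 2*P/3)) + 4*N*(N-1)*(e*(2*(L+g)+e)) + 4*N*(N-1)*d + 12*(N-1)*H' + 48*(N-1) - 128*N*(N-1)*r"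
  using assms by (simp add: field_simps power2_eq_square)

lemma idV:
  fixes N d H' r P :: real
  assumes "N \<noteq> 0"
  shows "N*(N-1)*(16 + 4*((H'+1/N)^2 - (P/6 - d)) + 12*H'/N + 48/N - 128*r) - (2*(N-1)*H')^2 - (16 - 2*P/3)*N^2
   = - (N*(16 - 2*P/3)) + 4*(N-1)*(H'^2 + 2*H' + 1/N) + 4*N*(N-1)*d + 12*(N-1)*H' + 48*(N-1) - 128*N*(N-1)*r"
  using assms by (simp add: field_simps power2_eq_square)

lemma gamma_bounds: "0 < (euler_mascheroni::real)" "euler_mascheroni < (1::real)"
proof -
  show "0 < (euler_mascheroni::real)" by (rule euler_mascheroni_pos)
  have "euler_mascheroni \<le> harm (Suc 0) - ln (real_of_nat (0 + 2)) + 1/real_of_nat (2 * (0 + 1))"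
    by (rule euler_mascheroni_upper)
  moreover have "harm (Suc 0) = (1::real)" by (simp add: harm_def)
  moreover have "2/3 \<le> ln (2::real)" by (rule ln2_ge_two_thirds)
  ultimately show "euler_mascheroni < (1::real)" by simp
qed

lemma common_bounds:
  assumes n: "n \<ge> 2"
  shows "0 \<le> ln (real n)" "\<bar>harm n - ln (real n) - euler_mascheroni\<bar> \<le> 1 / real n"
    "0 \<le> pi^2/6 - h2 n" "pi^2/6 - h2 n \<le> 1 / real n"
    "0 \<le> (harm (n-1)::real)" "harm (n-1) \<le> ln (real n) + 2"
    "0 \<le> rho n" "real n ^ 2 * rho n \<le> real n powr (3/2)" "pi^2 \<le> (16::real)"
    "1 / real n \<le> 1"
proof -
  show "0 \<le> ln (real n)" using n by simp
  show e: "\<bar>harm n - ln (real n) - euler_mascheroni\<bar> \<le> 1 / real n" using n by (intro harm_err) simp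
  show "0 \<le> pi^2/6 - h2 n" using h2_le[of n] by simp
  show "pi^2/6 - h2 n \<le> 1 / real n" using n by (intro h2_tail) simp
  show "0 \<le> (harm (n-1)::real)" by (rule harm_nonneg)
  show i: "1 / real n \<le> 1" using n by simp
  have "harm (n-1) \<le> (harm n :: real)" by (rule harm_mono) simp
  also have "\<dots> \<le> ln (real n) + euler_mascheroni + 1 / real n" using e by (simp add: abs_le_iff)
  also have "\<dots> \<le> ln (real n) + 2" using gamma_bounds i by simp
  finally show "harm (n-1) \<le> ln (real n) + 2" .
  show "0 \<le> rho n" by (rule rho_nonneg)
  show "real n ^ 2 * rho n \<le> real n powr (3/2)" by (rule rho_bound)
  have "pi \<le> 4" using pi_less_4 by simp
  then have "pi^2 \<le> 4^2" by (intro power_mono) (use pi_gt_zero in auto)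
  then show "pi^2 \<le> (16::real)" by simp
qed

definition G1 :: "nat \<Rightarrow> real" where
  "G1 n = real n * (16 + 4 * (ln (real n) + 1)^2) + 4 * real n * (2 * ln (real n) + 3) + 4 * real n
     + 12 * real n * (ln (real n) + 2) + 48 * real n + 128 * real n powr (3/2)"

definition G2 :: "nat \<Rightarrow> real" where
  "G2 n = 16 * real n + 4 * real n * ((ln (real n) + 2)^2 + 2 * (ln (real n) + 2) + 1) + 4 * real n
     + 12 * real n * (ln (real n) + 2) + 48 * real n + 128 * real n powr (3/2)"

lemma tail_terms:
  fixes N d H' r L :: real
  assumes N: "N \<ge> 2" and d: "0 \<le> d" "d \<le> 1/N" and H: "0 \<le> H'" "H' \<le> L + 2"
    and r: "0 \<le> r" "N^2 * r \<le> P"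
  shows "0 \<le> 4*N*(N-1)*d" "4*N*(N-1)*d \<le> 4*N"
    "0 \<le> 12*(N-1)*H'" "12*(N-1)*H' \<le> 12*N*(L+2)"
    "0 \<le> 48*(N-1)" "48*(N-1) \<le> 48*N"
    "0 \<le> 128*N*(N-1)*r" "128*N*(N-1)*r \<le> 128*P"
proof -
  have N0: "0 \<le> N - 1" "N - 1 \<le> N" "0 < N" using N by simp_all
  show "0 \<le> 4*N*(N-1)*d" using N0 d by simp
  have "4*N*(N-1)*d \<le> 4*N*(N-1)*(1/N)" using N0 d by (intro mult_left_mono) auto
  also have "\<dots> = 4*(N-1)" using N0 by simp
  finally show "4*N*(N-1)*d \<le> 4*N" by simp
  show "0 \<le> 12*(N-1)*H'" using N0 H by simp
  show "12*(N-1)*H' \<le> 12*N*(L+2)" using N0 H by (intro mult_mono) auto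
  show "0 \<le> 48*(N-1)" "48*(N-1) \<le> 48*N" using N0 by simp_all
  show "0 \<le> 128*N*(N-1)*r" using N0 r by simp
  have "N*(N-1)*r \<le> N*N*r" using N0 r by (intro mult_right_mono mult_left_mono) auto
  also have "\<dots> = N^2*r" by (simp add: power2_eq_square)
  finally show "128*N*(N-1)*r \<le> 128*P" using r by simp
qed

lemma boundZ:
  assumes n: "n \<ge> 2"
  shows "\<bar>c n - (4 * (real n * ln (real n)) ^ 2 + 8 * euler_mascheroni * (real n) ^ 2 * ln (real n)
               + (16 + 4 * euler_mascheroni ^ 2 - 2 * pi ^ 2 / 3) * (real n) ^ 2)\<bar> \<le> G1 n"
proof -
  define N where "N = real n"
  define L where "L = ln N"
  define g :: real where "g = euler_mascheroni"
  define e where "e = harm n - L - g"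
  define d where "d = pi^2/6 - h2 n"
  define H' :: real where "H' = harm (n-1)"
  define r where "r = rho n"
  note cb = common_bounds[OF n, folded N_def, folded L_def g_def e_def d_def H'_def r_def]
  have N2: "N \<ge> 2" using n by (simp add: N_def)
  have cn: "c n = N*(N-1)*(16 + 4*((e+L+g)^2 - (pi^2/6 - d)) + 12*H'/N + 48/N - 128*r)"
    using closed2(2)[OF n] by (simp add: N_def L_def g_def e_def d_def H'_def r_def)
  have id: "c n - (4 * (N * L) ^ 2 + 8 * g * N ^ 2 * L + (16 + 4 * g ^ 2 - 2 * pi^2 / 3) * N ^ 2)
    = - (N*(16 + 4*(L+g)^2 - 2*pi^2/3)) + 4*N*(N-1)*(e*(2*(L+g)+e)) + 4*N*(N-1)*d + 12*(N-1)*H' + 48*(N-1) - 128*N*(N-1)*r"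
    unfolding cn by (rule idZ) (use N2 in simp)
  have gb: "0 < g" "g < 1" using gamma_bounds by (simp_all add: g_def)
  have L0: "0 \<le> L" using cb(1) .
  have sq: "(L+g)^2 \<le> (L+1)^2" using L0 gb by (intro power_mono) auto
  have A0: "0 \<le> 16 + 4*(L+g)^2 - 2*pi^2/3" using cb(9) zero_le_power2[of "L+g"] by linarith
  have A1: "16 + 4*(L+g)^2 - 2*pi^2/3 \<le> 16 + 4*(L+1)^2" using sq zero_le_power2[of pi] by linarith
  have T1a: "N*(16 + 4*(L+g)^2 - 2*pi^2/3) \<le> N*(16 + 4*(L+1)^2)" using A1 N2 by (intro mult_left_mono) auto
  have T1b: "0 \<le> N*(16 + 4*(L+g)^2 - 2*pi^2/3)" using A0 N2 by simp
  have ea: "\<bar>e\<bar> \<le> 1/N" using cb(2) by (simp add: e_def)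
  have e1: "\<bar>e\<bar> \<le> 1" using ea cb(10) by simp
  have "\<bar>e*(2*(L+g)+e)\<bar> = \<bar>e\<bar> * \<bar>2*(L+g)+e\<bar>" by (simp add: abs_mult)
  also have "\<dots> \<le> (1/N) * (2*L+3)"
    using ea e1 L0 gb N2 by (intro mult_mono) (auto simp: abs_le_iff)
  finally have eb: "\<bar>e*(2*(L+g)+e)\<bar> \<le> (1/N) * (2*L+3)" .
  have "\<bar>4*N*(N-1)*(e*(2*(L+g)+e))\<bar> = 4*N*(N-1)*\<bar>e*(2*(L+g)+e)\<bar>" using N2 by (simp add: abs_mult)
  also have "\<dots> \<le> 4*N*(N-1)*((1/N) * (2*L+3))" using eb N2 by (intro mult_left_mono) auto
  also have "\<dots> = 4*(N-1)*(2*L+3)" using N2 by simp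
  also have "\<dots> \<le> 4*N*(2*L+3)" using L0 by (intro mult_right_mono) auto
  finally have T2: "\<bar>4*N*(N-1)*(e*(2*(L+g)+e))\<bar> \<le> 4*N*(2*L+3)" .
  note tt = tail_terms[OF N2 cb(3) cb(4) cb(5) cb(6) cb(7) cb(8)]
  have G: "G1 n = N * (16 + 4 * (L + 1)^2) + 4 * N * (2 * L + 3) + 4 * N
     + 12 * N * (L + 2) + 48 * N + 128 * N powr (3/2)" by (simp add: G1_def N_def L_def)
  have T2': "- (4*N*(2*L+3)) \<le> 4*N*(N-1)*(e*(2*(L+g)+e))" "4*N*(N-1)*(e*(2*(L+g)+e)) \<le> 4*N*(2*L+3)"
    using T2 unfolding abs_le_iff by linarith+
  have P: "0 \<le> N powr (3/2)" by simp
  have bnd: "\<bar>- (N*(16 + 4*(L+g)^2 - 2*pi^2/3)) + 4*N*(N-1)*(e*(2*(L+g)+e)) + 4*N*(N-1)*d + 12*(N-1)*H' + 48*(N-1) - 128*N*(N-1)*r\<bar>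
     \<le> N * (16 + 4 * (L + 1)^2) + 4 * N * (2 * L + 3) + 4 * N
     + 12 * N * (L + 2) + 48 * N + 128 * N powr (3/2)"
    unfolding abs_le_iff using T1a T1b T2' tt P by linarith
  show ?thesis
    unfolding N_def[symmetric] L_def[symmetric] g_def[symmetric] id G by (rule bnd)
qed

lemma boundV:
  assumes n: "n \<ge> 2"
  shows "\<bar>c n - a n ^ 2 - (16 - 2 * pi ^ 2 / 3) * (real n) ^ 2\<bar> \<le> G2 n"
proof -
  define N where "N = real n"
  define L where "L = ln N"
  define d where "d = pi^2/6 - h2 n"
  define H' :: real where "H' = harm (n-1)"
  define r where "r = rho n"
  note cb = common_bounds[OF n]
  have N2: "N \<ge> 2" using n by (simp add: N_def)
  have hn: "harm n = H' + 1/N"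
  proof -
    have "n = Suc (n-1)" using n by simp
    then have "harm n = harm (n-1) + 1 / (real (n-1) + 1)" by (metis harm_Suc')
    also have "real (n-1) + 1 = N" using n by (simp add: N_def of_nat_diff)
    finally show ?thesis by (simp add: H'_def)
  qed
  have cn: "c n = N*(N-1)*(16 + 4*((H'+1/N)^2 - (pi^2/6 - d)) + 12*H'/N + 48/N - 128*r)"
  proof -
    have hn': "harm n = harm (n-1) + 1 / real n" using hn by (simp add: H'_def N_def)
    show ?thesis using closed2(2)[OF n] unfolding hn' by (simp add: N_def d_def H'_def r_def)
  qed
  have an: "a n = 2*(N-1)*H'" using closed2(1)[OF n] by (simp add: N_def H'_def)
  have id: "c n - a n ^ 2 - (16 - 2*pi^2/3)*N^2
   = - (N*(16 - 2*pi^2/3)) + 4*(N-1)*(H'^2 + 2*H' + 1/N) + 4*N*(N-1)*d + 12*(N-1)*H' + 48*(N-1) - 128*N*(N-1)*r"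
    unfolding cn an by (rule idV) (use N2 in simp)
  have L0: "0 \<le> L" using cb(1) by (simp add: L_def N_def)
  have p0: "0 \<le> pi^2" by simp
  have T1a: "0 \<le> N*(16 - 2*pi^2/3)" using cb(9) N2 by simp
  have T1b: "N*(16 - 2*pi^2/3) \<le> 16*N" using p0 N2 by (simp add: algebra_simps)
  have H0: "0 \<le> H'" "H' \<le> L + 2" using cb(5,6) by (simp_all add: H'_def L_def N_def)
  have iN: "0 \<le> 1/N" "1/N \<le> 1" using N2 by simp_all
  have sq: "H'^2 \<le> (L+2)^2" using H0 by (intro power_mono) auto
  have B0: "0 \<le> H'^2 + 2*H' + 1/N" using H0 iN by simp
  have B1: "H'^2 + 2*H' + 1/N \<le> (L+2)^2 + 2*(L+2) + 1" by (intro add_mono) (use sq H0 iN in auto)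
  have T2a: "0 \<le> 4*(N-1)*(H'^2 + 2*H' + 1/N)" using B0 N2 by simp
  have "4*(N-1)*(H'^2 + 2*H' + 1/N) \<le> 4*N*((L+2)^2 + 2*(L+2) + 1)"
    using B0 B1 N2 by (intro mult_mono) auto
  note T2b = this
  note tt = tail_terms[OF N2, of d H' L r "N powr (3/2)"]
  have tt': "0 \<le> d" "d \<le> 1/N" "0 \<le> r" "N^2 * r \<le> N powr (3/2)"
    using cb(3,4,7,8) by (simp_all add: d_def r_def N_def)
  have P: "0 \<le> N powr (3/2)" by simp
  have G: "G2 n = 16 * N + 4 * N * ((L + 2)^2 + 2 * (L + 2) + 1) + 4 * N
     + 12 * N * (L + 2) + 48 * N + 128 * N powr (3/2)" by (simp add: G2_def N_def L_def)
  have bnd: "\<bar>- (N*(16 - 2*pi^2/3)) + 4*(N-1)*(H'^2 + 2*H' + 1/N) + 4*N*(N-1)*d + 12*(N-1)*H' + 48*(N-1) - 128*N*(N-1)*r\<bar>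
     \<le> 16 * N + 4 * N * ((L + 2)^2 + 2 * (L + 2) + 1) + 4 * N
     + 12 * N * (L + 2) + 48 * N + 128 * N powr (3/2)"
    using tt[OF tt'(1,2) H0 tt'(3,4)] T1a T1b T2a T2b P unfolding abs_le_iff by linarith
  show ?thesis
    unfolding N_def[symmetric] id G by (rule bnd)
qed

lemma G1_bigo: "G1 \<in> O(\<lambda>n. real n powr (3/2))"
  unfolding G1_def by real_asymp

lemma G2_bigo: "G2 \<in> O(\<lambda>n. real n powr (3/2))"
  unfolding G2_def by real_asymp

theorem proposition4p2:
  shows "(\<lambda>n. measure_pmf.expectation (tree_pmf n) (\<lambda>t. real (zagreb n t) ^ 2)
            - (4 * (real n * ln (real n)) ^ 2
               + 8 * euler_mascheroni * (real n) ^ 2 * ln (real n)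
               + (16 + 4 * euler_mascheroni ^ 2 - 2 * pi ^ 2 / 3) * (real n) ^ 2))
           \<in> O(\<lambda>n. real n powr (3 / 2))
       \<and> (\<lambda>n. measure_pmf.variance (tree_pmf n) (\<lambda>t. real (zagreb n t))
            - (16 - 2 * pi ^ 2 / 3) * (real n) ^ 2)
           \<in> O(\<lambda>n. real n powr (3 / 2))"
proof
  have ce: "measure_pmf.expectation (tree_pmf n) (\<lambda>t. real (zagreb n t) ^ 2) = c n" for n
    by (simp add: c_def Zr_def)
  show "(\<lambda>n. measure_pmf.expectation (tree_pmf n) (\<lambda>t. real (zagreb n t) ^ 2)
            - (4 * (real n * ln (real n)) ^ 2
               + 8 * euler_mascheroni * (real n) ^ 2 * ln (real n)
               + (16 + 4 * euler_mascheroni ^ 2 - 2 * pi ^ 2 / 3) * (real n) ^ 2))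
           \<in> O(\<lambda>n. real n powr (3 / 2))"
    unfolding ce
    by (rule bigo_bound[OF _ G1_bigo]) (use boundZ in \<open>auto simp: eventually_at_top_linorder intro!: exI[of _ 2]\<close>)
  have ve: "measure_pmf.variance (tree_pmf n) (\<lambda>t. real (zagreb n t)) = c n - a n ^ 2" for n
  proof -
    have "measure_pmf.variance (tree_pmf n) (Zr n) = measure_pmf.expectation (tree_pmf n) (\<lambda>t. (Zr n t)^2)
        - (measure_pmf.expectation (tree_pmf n) (Zr n))^2"
      by (rule measure_pmf.variance_eq) simp_all
    then show ?thesis by (simp add: a_def c_def Zr_def[abs_def])
  qed
  show "(\<lambda>n. measure_pmf.variance (tree_pmf n) (\<lambda>t. real (zagreb n t))
            - (16 - 2 * pi ^ 2 / 3) * (real n) ^ 2)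
           \<in> O(\<lambda>n. real n powr (3 / 2))"
    unfolding ve
    by (rule bigo_bound[OF _ G2_bigo]) (use boundV in \<open>auto simp: eventually_at_top_linorder intro!: exI[of _ 2]\<close>)
qed

end
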